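(* Let $k,n$ be integers with $k\geq 4$ and $n\geq 1$. (1) If $4\leq k\leq 2^{\mathrm{R}_3(\mathcal{B}_n)+n}$, then $\mathrm{GR}_k(\mathcal{B}_2:\mathcal{B}_n)\leq \mathrm{R}_3(\mathcal{B}_n)+n$. (2) If $k>2^{\mathrm{R}_3(\mathcal{B}_n)+n}$, then the pair $(\mathcal{B}_2,\mathcal{B}_n)$ is $(\mathcal{B}_2:\mathcal{B}_n)_k$-good.
   Context: $\mathcal{B}_N$ denotes the Boolean lattice of all subsets of $[N]$ ordered by inclusion. An induced copy of a poset $\mathcal{P}$ in a poset $\mathcal{Q}$ is the image of an injection $f:\mathcal{P}\to\mathcal{Q}$ with $f(X)\le f(Y)$ iff $X\le Y$. A $k$-coloring of $\mathcal{B}_N$ is exact if it uses colors from $[k]$ and every color is used. Monochromatic: all sets share a color; rainbow: pairwise distinct colors. $\mathrm{R}_k(\mathcal{P})$ (Boolean Ramsey number) is the smallest $n$ such that every coloring of $\mathcal{B}_n$ with $k$ colors contains a monochromatic induced copy of $\mathcal{P}$. The pair $(\mathcal{Q},\mathcal{P})$ is $(\mathcal{Q}:\mathcal{P})_k$-good if for every positive integer $N$, every exact $k$-coloring of $\mathcal{B}_N$ contains a rainbow induced copy of $\mathcal{Q}$ or a monochromatic induced copy of $\mathcal{P}$. For a pair that is not good, $\mathrm{GR}_k(\mathcal{Q}:\mathcal{P})$ is the smallest integer $n$ such that for every $N\ge n$, every exact $k$-coloring of $\mathcal{B}_N$ contains a rainbow induced copy of $\mathcal{Q}$ or a monochromatic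 induced copy of $\mathcal{P}$. *)

theory Defs
  imports Main
begin

definition boolean_lattice :: "nat \<Rightarrow> nat set set" where
  "boolean_lattice N = Pow {..<N}"

definition induced_copy :: "nat set set \<Rightarrow> nat \<Rightarrow> nat set set \<Rightarrow> bool" where
  "induced_copy P N S \<longleftrightarrow>
     (\<exists>f. inj_on f P \<and> f ` P \<subseteq> boolean_lattice N \<and>
          (\<forall>X\<in>P. \<forall>Y\<in>P. f X \<subseteq> f Y \<longleftrightarrow> X \<subseteq> Y) \<and> S = f ` P)"

definition coloring :: "nat \<Rightarrow> nat \<Rightarrow> (nat set \<Rightarrow> nat) \<Rightarrow> bool" where
  "coloring k N c \<longleftrightarrow> c ` boolean_lattice N \<subseteq> {1..k}"

definition exact_coloring :: "nat \<Rightarrow> nat \<Rightarrow> (nat set \<Rightarrow> nat) \<Rightarrow> bool" where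
  "exact_coloring k N c \<longleftrightarrow> c ` boolean_lattice N = {1..k}"

definition monochromatic :: "(nat set \<Rightarrow> nat) \<Rightarrow> nat set set \<Rightarrow> bool" where
  "monochromatic c S \<longleftrightarrow> (\<forall>X\<in>S. \<forall>Y\<in>S. c X = c Y)"

definition rainbow :: "(nat set \<Rightarrow> nat) \<Rightarrow> nat set set \<Rightarrow> bool" where
  "rainbow c S \<longleftrightarrow> inj_on c S"

definition boolean_ramsey :: "nat \<Rightarrow> nat set set \<Rightarrow> nat" where
  "boolean_ramsey k P = (LEAST n. \<forall>c. coloring k n c \<longrightarrow>
      (\<exists>S. induced_copy P n S \<and> monochromatic c S))"

definition gr_property :: "nat \<Rightarrow> nat set set \<Rightarrow> nat set set \<Rightarrow> nat \<Rightarrow> bool" where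
  "gr_property k Q P N \<longleftrightarrow> (\<forall>c. exact_coloring k N c \<longrightarrow>
      (\<exists>S. induced_copy Q N S \<and> rainbow c S) \<or> (\<exists>S. induced_copy P N S \<and> monochromatic c S))"

definition gr_good :: "nat \<Rightarrow> nat set set \<Rightarrow> nat set set \<Rightarrow> bool" where
  "gr_good k Q P \<longleftrightarrow> (\<forall>N. N > 0 \<longrightarrow> gr_property k Q P N)"

definition gallai_ramsey :: "nat \<Rightarrow> nat set set \<Rightarrow> nat set set \<Rightarrow> nat" where
  "gallai_ramsey k Q P = (LEAST n. \<forall>N\<ge>n. gr_property k Q P N)"

end

theory Submission
  imports Defs "HOL-Library.FuncSet"
begin


lemma ramsey_cube:
  fixes C :: "nat set" and n :: nat
  assumes "finite C"
  shows "\<exists>M::nat. \<forall>c::nat set \<Rightarrow> nat. (\<forall>Z. Z \<subseteq> {..<M} \<longrightarrow> c Z \<in> C) \<longrightarrow>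
     (\<exists>e col. (\<forall>S. S \<subseteq> {..<n} \<longrightarrow> e S \<subseteq> {..<M} \<and> c (e S) = col) \<and>
        (\<forall>S T. S \<subseteq> {..<n} \<longrightarrow> T \<subseteq> {..<n} \<longrightarrow> (e S \<subseteq> e T \<longleftrightarrow> S \<subseteq> T)))"
proof (induction n)
  case 0
  show ?case
  proof (rule exI[where x="0::nat"], intro allI impI)
    fix c :: "nat set \<Rightarrow> nat"
    show "\<exists>e col. (\<forall>S. S \<subseteq> {..<0::nat} \<longrightarrow> e S \<subseteq> {..<0} \<and> c (e S) = col) \<and>
        (\<forall>S T. S \<subseteq> {..<0::nat} \<longrightarrow> T \<subseteq> {..<0} \<longrightarrow> (e S \<subseteq> e T \<longleftrightarrow> S \<subseteq> T))"
      by (rule exI[of _ "\<lambda>S. {}"], rule exI[of _ "c {}"]) (auto simp: subset_eq)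
  qed
next
  case (Suc n)
  then obtain M :: nat where IH: "\<And>c. (\<forall>Z. Z \<subseteq> {..<M} \<longrightarrow> c Z \<in> C) \<Longrightarrow>
     (\<exists>e col. (\<forall>S. S \<subseteq> {..<n} \<longrightarrow> e S \<subseteq> {..<M} \<and> c (e S) = col) \<and>
        (\<forall>S T. S \<subseteq> {..<n} \<longrightarrow> T \<subseteq> {..<n} \<longrightarrow> (e S \<subseteq> e T \<longleftrightarrow> S \<subseteq> T)))"
    by blast
  define F where "F = Pow {..<M} \<rightarrow>\<^sub>E C"
  have finF: "finite F" unfolding F_def using assms by (simp add: finite_PiE)
  define L where "L = card F"
  show ?case
  proof (rule exI[of _ "M + L"], intro allI impI)
    fix c :: "nat set \<Rightarrow> nat"
    assume col: "\<forall>Z. Z \<subseteq> {..<M+L} \<longrightarrow> c Z \<in> C"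
    define A where "A i = {M..<M+i}" for i
    define \<phi> where "\<phi> i = restrict (\<lambda>Y. c (A i \<union> Y)) (Pow {..<M})" for i
    have phiF: "\<phi> ` {0..L} \<subseteq> F"
    proof
      fix g assume "g \<in> \<phi> ` {0..L}"
      then obtain i where i: "i \<le> L" "g = \<phi> i" by auto
      have "\<And>Y. Y \<subseteq> {..<M} \<Longrightarrow> c (A i \<union> Y) \<in> C"
        using col i(1) unfolding A_def by (intro col[rule_format]) auto
      then show "g \<in> F" unfolding F_def i(2) \<phi>_def by auto
    qed
    have "card (\<phi> ` {0..L}) \<le> L" using card_mono[OF finF phiF] unfolding L_def .
    then have "\<not> inj_on \<phi> {0..L}" by (intro pigeonhole) simp
    then obtain x y where xy: "x \<le> L" "y \<le> L" "x \<noteq> y" "\<phi> x = \<phi> y"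
      unfolding inj_on_def by auto
    obtain i j where ij: "i < j" "j \<le> L" "\<phi> i = \<phi> j"
    proof (cases "x < y")
      case True then show ?thesis using that[of x y] xy by simp
    next
      case False then show ?thesis using that[of y x] xy by simp
    qed
    have "\<forall>Z. Z \<subseteq> {..<M} \<longrightarrow> c (A i \<union> Z) \<in> C"
      using col ij unfolding A_def by (intro allI impI col[rule_format]) auto
    from IH[OF this] obtain e0 col where
      e0: "\<And>S. S \<subseteq> {..<n} \<Longrightarrow> e0 S \<subseteq> {..<M} \<and> c (A i \<union> e0 S) = col"
      and e0o: "\<And>S T. S \<subseteq> {..<n} \<Longrightarrow> T \<subseteq> {..<n} \<Longrightarrow> (e0 S \<subseteq> e0 T \<longleftrightarrow> S \<subseteq> T)"
      by blast
    define B where "B S = (if n \<in> S then {M+i..<M+j} else {})" for S :: "nat set"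
    define e where "e S = A i \<union> B S \<union> e0 (S - {n})" for S
    have AB: "A i \<union> B S \<subseteq> {M..}" for S unfolding A_def B_def by auto
    have eq1: "e S \<inter> {..<M} = e0 (S - {n})" if "S \<subseteq> {..<Suc n}" for S
    proof -
      have "S - {n} \<subseteq> {..<n}" using that by auto
      then have "e0 (S - {n}) \<subseteq> {..<M}" using e0 by blast
      then show ?thesis using AB[of S] unfolding e_def by auto
    qed
    have eq2: "e S \<inter> {M..} = A i \<union> B S" if "S \<subseteq> {..<Suc n}" for S
    proof -
      have "S - {n} \<subseteq> {..<n}" using that by auto
      then have "e0 (S - {n}) \<subseteq> {..<M}" using e0 by blast
      then show ?thesis using AB[of S] unfolding e_def by auto
    qed
    have split: "X \<subseteq> Y \<longleftrightarrow> X \<inter> {..<M} \<subseteq> Y \<inter> {..<M} \<and> X \<inter> {M..} \<subseteq> Y \<inter> {M..}" for X Y :: "nat set"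
      by (auto simp: subset_iff, metis IntI atLeast_iff lessThan_iff not_le)
    show "\<exists>e col. (\<forall>S. S \<subseteq> {..<Suc n} \<longrightarrow> e S \<subseteq> {..<M+L} \<and> c (e S) = col) \<and>
        (\<forall>S T. S \<subseteq> {..<Suc n} \<longrightarrow> T \<subseteq> {..<Suc n} \<longrightarrow> (e S \<subseteq> e T \<longleftrightarrow> S \<subseteq> T))"
    proof (intro exI[of _ e] exI[of _ col] conjI allI impI)
      fix S assume S: "S \<subseteq> {..<Suc n}"
      have S': "S - {n} \<subseteq> {..<n}" using S by auto
      have "e0 (S - {n}) \<subseteq> {..<M}" using e0[OF S'] by blast
      then show "e S \<subseteq> {..<M+L}" using ij unfolding e_def A_def B_def by auto
      show "c (e S) = col"
      proof (cases "n \<in> S")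
        case False
        then show ?thesis using e0[OF S'] unfolding e_def B_def by simp
      next
        case True
        have "e S = A j \<union> e0 (S - {n})" using True ij unfolding e_def B_def A_def by auto
        moreover have "c (A j \<union> e0 (S - {n})) = c (A i \<union> e0 (S - {n}))"
        proof -
          have "\<phi> j (e0 (S - {n})) = \<phi> i (e0 (S - {n}))" using ij by simp
          then show ?thesis using e0[OF S'] unfolding \<phi>_def by simp
        qed
        ultimately show ?thesis using e0[OF S'] by simp
      qed
    next
      fix S T assume S: "S \<subseteq> {..<Suc n}" and T: "T \<subseteq> {..<Suc n}"
      have S': "S - {n} \<subseteq> {..<n}" and T': "T - {n} \<subseteq> {..<n}" using S T by auto
      have "A i \<union> B S \<subseteq> A i \<union> B T \<longleftrightarrow> (n \<in> S \<longrightarrow> n \<in> T)"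
      proof
        assume h: "A i \<union> B S \<subseteq> A i \<union> B T"
        show "n \<in> S \<longrightarrow> n \<in> T"
        proof
          assume "n \<in> S"
          then have "M + i \<in> A i \<union> B S" using ij unfolding B_def by simp
          then have "M + i \<in> A i \<union> B T" using h by blast
          then show "n \<in> T" unfolding A_def B_def by (auto split: if_splits)
        qed
      next
        assume "n \<in> S \<longrightarrow> n \<in> T"
        then show "A i \<union> B S \<subseteq> A i \<union> B T" unfolding B_def by auto
      qed
      moreover have "S \<subseteq> T \<longleftrightarrow> (n \<in> S \<longrightarrow> n \<in> T) \<and> S - {n} \<subseteq> T - {n}" by auto
      ultimately show "e S \<subseteq> e T \<longleftrightarrow> S \<subseteq> T"
        using split[of "e S" "e T"] eq1[OF S] eq1[OF T] eq2[OF S] eq2[OF T] e0o[OF S' T'] by (simp only:) blast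
    qed
  qed
qed



lemma ramsey_exists:
  "\<exists>m. \<forall>c. coloring 3 m c \<longrightarrow> (\<exists>S. induced_copy (boolean_lattice n) m S \<and> monochromatic c S)"
proof -
  obtain M :: nat where M: "\<And>c::nat set \<Rightarrow> nat. (\<forall>Z. Z \<subseteq> {..<M} \<longrightarrow> c Z \<in> {1..3}) \<Longrightarrow>
     (\<exists>e col. (\<forall>S. S \<subseteq> {..<n} \<longrightarrow> e S \<subseteq> {..<M} \<and> c (e S) = col) \<and>
        (\<forall>S T. S \<subseteq> {..<n} \<longrightarrow> T \<subseteq> {..<n} \<longrightarrow> (e S \<subseteq> e T \<longleftrightarrow> S \<subseteq> T)))"
    using ramsey_cube[of "{1..3::nat}" n] by auto
  show ?thesis
  proof (rule exI[of _ M], intro allI impI)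
    fix c assume "coloring 3 M c"
    then have "\<forall>Z. Z \<subseteq> {..<M} \<longrightarrow> c Z \<in> {1..3}"
      unfolding coloring_def boolean_lattice_def by blast
    from M[OF this] obtain e col where
      e1: "\<And>S. S \<subseteq> {..<n} \<Longrightarrow> e S \<subseteq> {..<M} \<and> c (e S) = col" and
      e2: "\<And>S T. S \<subseteq> {..<n} \<Longrightarrow> T \<subseteq> {..<n} \<Longrightarrow> (e S \<subseteq> e T \<longleftrightarrow> S \<subseteq> T)"
      by blast
    have "induced_copy (boolean_lattice n) M (e ` boolean_lattice n)"
      unfolding induced_copy_def
    proof (intro exI[of _ e] conjI)
      show "inj_on e (boolean_lattice n)"
      proof (rule inj_onI)
        fix X Y assume "X \<in> boolean_lattice n" "Y \<in> boolean_lattice n" "e X = e Y"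
        then have "X \<subseteq> {..<n}" "Y \<subseteq> {..<n}" unfolding boolean_lattice_def by auto
        with e2 \<open>e X = e Y\<close> show "X = Y" by (metis order_refl subset_antisym)
      qed
      show "e ` boolean_lattice n \<subseteq> boolean_lattice M"
        unfolding boolean_lattice_def using e1 by auto
      show "\<forall>X\<in>boolean_lattice n. \<forall>Y\<in>boolean_lattice n. (e X \<subseteq> e Y) = (X \<subseteq> Y)"
        unfolding boolean_lattice_def using e2 by auto
    qed simp
    moreover have "monochromatic c (e ` boolean_lattice n)"
      unfolding monochromatic_def boolean_lattice_def using e1 by auto
    ultimately show "\<exists>S. induced_copy (boolean_lattice n) M S \<and> monochromatic c S" by blast
  qed
qed

lemma ramsey_R:
  "\<forall>c. coloring 3 (boolean_ramsey 3 (boolean_lattice n)) c \<longrightarrow>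
     (\<exists>S. induced_copy (boolean_lattice n) (boolean_ramsey 3 (boolean_lattice n)) S \<and> monochromatic c S)"
  unfolding boolean_ramsey_def by (rule LeastI_ex[OF ramsey_exists])

lemma transfer:
  fixes h :: "nat \<Rightarrow> nat"
  assumes PR: "\<forall>c. coloring 3 R c \<longrightarrow> (\<exists>S. induced_copy P R S \<and> monochromatic c S)"
    and h: "inj_on h {..<R}" "h ` {..<R} \<subseteq> D" "D \<subseteq> {..<N}"
    and col: "\<And>Z. Z \<subseteq> D \<Longrightarrow> c Z \<in> {\<alpha>, \<beta>, p}"
  shows "\<exists>S. induced_copy P N S \<and> monochromatic c S"
proof -
  define r where "r x = (if x = \<alpha> then 1 else if x = \<beta> then 2 else (3::nat))" for x
  define c' where "c' Z = r (c (h ` Z))" for Z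
  have rinj: "r x = r y \<Longrightarrow> x \<in> {\<alpha>, \<beta>, p} \<Longrightarrow> y \<in> {\<alpha>, \<beta>, p} \<Longrightarrow> x = y" for x y
    unfolding r_def by (auto split: if_splits)
  have "coloring 3 R c'" unfolding coloring_def c'_def r_def by auto
  with PR obtain S where S: "induced_copy P R S" "monochromatic c' S" by blast
  then obtain f where f: "inj_on f P" "f ` P \<subseteq> boolean_lattice R"
      "\<forall>X\<in>P. \<forall>Y\<in>P. f X \<subseteq> f Y \<longleftrightarrow> X \<subseteq> Y" "S = f ` P"
    unfolding induced_copy_def by blast
  have fR: "X \<in> P \<Longrightarrow> f X \<subseteq> {..<R}" for X using f(2) unfolding boolean_lattice_def by auto
  have himg: "A \<subseteq> {..<R} \<Longrightarrow> B \<subseteq> {..<R} \<Longrightarrow> h ` A \<subseteq> h ` B \<longleftrightarrow> A \<subseteq> B" for A B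
  proof
    assume AB: "A \<subseteq> {..<R}" "B \<subseteq> {..<R}" "h ` A \<subseteq> h ` B"
    show "A \<subseteq> B"
    proof
      fix x assume "x \<in> A"
      then have "h x \<in> h ` B" using AB(3) by blast
      then show "x \<in> B" using inj_on_image_mem_iff[OF h(1)] AB \<open>x \<in> A\<close> by blast
    qed
  qed blast
  have hD: "X \<in> P \<Longrightarrow> h ` f X \<subseteq> D" for X using fR h(2) by blast
  define g where "g X = h ` f X" for X
  have gord: "\<forall>X\<in>P. \<forall>Y\<in>P. g X \<subseteq> g Y \<longleftrightarrow> X \<subseteq> Y"
  proof (intro ballI)
    fix X Y assume XY: "X \<in> P" "Y \<in> P"
    have "g X \<subseteq> g Y \<longleftrightarrow> f X \<subseteq> f Y" unfolding g_def using himg[OF fR[OF XY(1)] fR[OF XY(2)]] .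
    also have "\<dots> \<longleftrightarrow> X \<subseteq> Y" using f(3) XY by blast
    finally show "g X \<subseteq> g Y \<longleftrightarrow> X \<subseteq> Y" .
  qed
  have "induced_copy P N (g ` P)"
    unfolding induced_copy_def
  proof (intro exI[of _ g] conjI)
    show "inj_on g P"
    proof (rule inj_onI)
      fix X Y assume "X \<in> P" "Y \<in> P" "g X = g Y"
      then show "X = Y" using gord by (metis order_refl subset_antisym)
    qed
    show "g ` P \<subseteq> boolean_lattice N" unfolding boolean_lattice_def g_def using hD h(3) by auto
    show "\<forall>X\<in>P. \<forall>Y\<in>P. g X \<subseteq> g Y \<longleftrightarrow> X \<subseteq> Y" by (rule gord)
  qed simp
  moreover have "monochromatic c (g ` P)"
    unfolding monochromatic_def
  proof (intro ballI)
    fix U V assume "U \<in> g ` P" "V \<in> g ` P"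
    then obtain X Y where XY: "X \<in> P" "Y \<in> P" "U = g X" "V = g Y" by blast
    have "c' (f X) = c' (f Y)" using S(2) XY f(4) unfolding monochromatic_def by blast
    then have "r (c U) = r (c V)" unfolding c'_def XY g_def .
    moreover have "c U \<in> {\<alpha>, \<beta>, p}" "c V \<in> {\<alpha>, \<beta>, p}"
      using col hD XY unfolding g_def by auto
    ultimately show "c U = c V" using rinj by blast
  qed
  ultimately show ?thesis by blast
qed



lemma sub2: "X \<subseteq> {..<2::nat} \<Longrightarrow> Y \<subseteq> {..<2} \<Longrightarrow> (X \<subseteq> Y \<longleftrightarrow> (0 \<in> X \<longrightarrow> 0 \<in> Y) \<and> (1 \<in> X \<longrightarrow> 1 \<in> Y))"
proof -
  assume X: "X \<subseteq> {..<2::nat}" and "Y \<subseteq> {..<2}"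
  have "x \<in> X \<Longrightarrow> x = 0 \<or> x = 1" for x using X by auto
  then show ?thesis by auto
qed

lemma b2_rainbow:
  assumes W: "W \<subseteq> {..<N}" and PW: "P \<subseteq> W" and SW: "S \<subseteq> W"
    and PS: "\<not> P \<subseteq> S" and SP: "\<not> S \<subseteq> P"
    and d: "c {} \<noteq> c P" "c {} \<noteq> c S" "c {} \<noteq> c W" "c P \<noteq> c S" "c P \<noteq> c W" "c S \<noteq> c W"
  shows "\<exists>T. induced_copy (boolean_lattice 2) N T \<and> rainbow c T"
proof -
  define f where "f X = (if 0 \<in> X then (if 1 \<in> X then W else P) else (if 1 \<in> X then S else {}))"
    for X :: "nat set"
  have facts: "P \<noteq> {}" "S \<noteq> {}" "\<not> W \<subseteq> P" "\<not> W \<subseteq> S" "\<not> P \<subseteq> {}" "\<not> S \<subseteq> {}" "\<not> W \<subseteq> {}" "W \<noteq> {}"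
    using PS SP PW SW by auto
  have ord: "\<forall>X\<in>boolean_lattice 2. \<forall>Y\<in>boolean_lattice 2. (f X \<subseteq> f Y) = (X \<subseteq> Y)"
  proof (intro ballI)
    fix X Y assume "X \<in> boolean_lattice 2" "Y \<in> boolean_lattice 2"
    then have XY: "X \<subseteq> {..<2}" "Y \<subseteq> {..<2}" unfolding boolean_lattice_def by auto
    show "(f X \<subseteq> f Y) = (X \<subseteq> Y)"
      unfolding sub2[OF XY] f_def
      by (cases "0 \<in> X"; cases "1 \<in> X"; cases "0 \<in> Y"; cases "1 \<in> Y") (simp_all add: facts PW SW PS SP)
  qed
  have img: "f ` boolean_lattice 2 \<subseteq> {{}, P, S, W}" unfolding f_def by auto
  have "induced_copy (boolean_lattice 2) N (f ` boolean_lattice 2)"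
    unfolding induced_copy_def
  proof (intro exI[of _ f] conjI)
    show "inj_on f (boolean_lattice 2)"
    proof (rule inj_onI)
      fix X Y assume "X \<in> boolean_lattice 2" "Y \<in> boolean_lattice 2" "f X = f Y"
      then show "X = Y" using ord by (metis order_refl subset_antisym)
    qed
    show "f ` boolean_lattice 2 \<subseteq> boolean_lattice N"
    proof -
      have "{{}, P, S, W} \<subseteq> boolean_lattice N" using W PW SW unfolding boolean_lattice_def by auto
      then show ?thesis using img by blast
    qed
    show "\<forall>X\<in>boolean_lattice 2. \<forall>Y\<in>boolean_lattice 2. (f X \<subseteq> f Y) = (X \<subseteq> Y)" by (rule ord)
  qed simp
  moreover have "rainbow c (f ` boolean_lattice 2)"
    unfolding rainbow_def
  proof (rule inj_on_subset[OF _ img])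
    show "inj_on c {{}, P, S, W}" using d unfolding inj_on_def by auto
  qed
  ultimately show ?thesis by blast
qed

lemma interval:
  assumes W: "W \<subseteq> {..<N}" and cW: "c {} \<noteq> c W"
    and norb: "\<not> (\<exists>T. induced_copy (boolean_lattice 2) N T \<and> rainbow c T)"
  shows "\<exists>x\<in>W. \<exists>p. \<forall>Z. Z \<subseteq> W - {x} \<longrightarrow> c Z \<in> {c {}, c W, p}"
proof (cases "\<exists>S. S \<subseteq> W \<and> c S \<notin> {c {}, c W}")
  case False
  have "W \<noteq> {}" using cW by auto
  then obtain x where "x \<in> W" by blast
  then show ?thesis using False by blast
next
  case True
  then obtain P where P: "P \<subseteq> W \<and> c P \<notin> {c {}, c W}"
    and Pmin: "\<And>S. S \<subseteq> W \<and> c S \<notin> {c {}, c W} \<Longrightarrow> card P \<le> card S"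
  proof -
    from True obtain S0 where "S0 \<subseteq> W \<and> c S0 \<notin> {c {}, c W}" by blast
    from ex_has_least_nat[of "\<lambda>S. S \<subseteq> W \<and> c S \<notin> {c {}, c W}", OF this, of card]
    obtain P where "P \<subseteq> W \<and> c P \<notin> {c {}, c W}"
      "\<forall>S. S \<subseteq> W \<and> c S \<notin> {c {}, c W} \<longrightarrow> card P \<le> card S" by blast
    then show ?thesis using that by blast
  qed
  have finW: "finite W" using W finite_subset by blast
  have "P \<noteq> {}" using P by auto
  then obtain x where x: "x \<in> P" by blast
  have "\<forall>Z. Z \<subseteq> W - {x} \<longrightarrow> c Z \<in> {c {}, c W, c P}"
  proof (intro allI impI)
    fix Z assume Z: "Z \<subseteq> W - {x}"
    show "c Z \<in> {c {}, c W, c P}"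
    proof (rule ccontr)
      assume nZ: "c Z \<notin> {c {}, c W, c P}"
      have "\<not> P \<subseteq> Z" using x Z by auto
      moreover have "\<not> Z \<subseteq> P"
      proof
        assume "Z \<subseteq> P"
        moreover have "Z \<noteq> P" using nZ by auto
        ultimately have "card Z < card P" using finW P by (meson finite_subset psubsetI psubset_card_mono)
        moreover have "card P \<le> card Z" using Pmin[of Z] Z nZ by auto
        ultimately show False by simp
      qed
      moreover have "P \<subseteq> W" "Z \<subseteq> W" using P Z by auto
      moreover have "c {} \<noteq> c P" "c {} \<noteq> c Z" "c {} \<noteq> c W" "c P \<noteq> c Z" "c P \<noteq> c W" "c Z \<noteq> c W"
        using P nZ cW by auto
      ultimately show False
        using b2_rainbow[OF W, of P Z c] norb by blast
    qed
  qed
  then show ?thesis using x P by blast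
qed



lemma main:
  assumes PR: "\<forall>c. coloring 3 R c \<longrightarrow> (\<exists>S. induced_copy (boolean_lattice n) R S \<and> monochromatic c S)"
    and N: "R + n \<le> N"
  shows "(\<exists>S. induced_copy (boolean_lattice n) N S \<and> monochromatic c S) \<or>
         (\<exists>S. induced_copy (boolean_lattice 2) N S \<and> rainbow c S)"
proof (rule disjCI)
  assume norb: "\<not> (\<exists>S. induced_copy (boolean_lattice 2) N S \<and> rainbow c S)"
  show "\<exists>S. induced_copy (boolean_lattice n) N S \<and> monochromatic c S"
  proof (cases "\<exists>W. W \<subseteq> {..<N} \<and> N - n + 1 \<le> card W \<and> c W \<noteq> c {}")
    case True
    then obtain W where W: "W \<subseteq> {..<N}" "N - n + 1 \<le> card W" "c W \<noteq> c {}" by blast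
    from interval[OF W(1) _ norb] W(3) obtain x p where x: "x \<in> W"
      and col: "\<And>Z. Z \<subseteq> W - {x} \<Longrightarrow> c Z \<in> {c {}, c W, p}" by metis
    have finW: "finite W" using W(1) finite_subset by blast
    have "card (W - {x}) = card W - 1" using x finW by simp
    then have "R \<le> card (W - {x})" using W(2) N by linarith
    then obtain T where T: "T \<subseteq> W - {x}" "card T = R" "finite T" by (rule obtain_subset_with_card_n)
    from ex_bij_betw_nat_finite[OF T(3)] obtain h where h: "bij_betw h {0..<R} T" using T(2) by auto
    have hinj: "inj_on h {..<R}" using h unfolding bij_betw_def by (simp add: atLeast0LessThan)
    have himg: "h ` {..<R} \<subseteq> W - {x}" using h T(1) unfolding bij_betw_def by (simp add: atLeast0LessThan)
    have D: "W - {x} \<subseteq> {..<N}" using W(1) by blast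
    show ?thesis by (rule transfer[OF PR hinj himg D col])
  next
    case False
    then have big: "\<And>W. W \<subseteq> {..<N} \<Longrightarrow> N - n + 1 \<le> card W \<Longrightarrow> c W = c {}" by blast
    define f where "f S = (if S = {} then {} else {n..<N} \<union> S)" for S :: "nat set"
    have nN: "n \<le> N" using N by simp
    have fsub: "S \<subseteq> {..<n} \<Longrightarrow> f S \<subseteq> {..<N}" for S unfolding f_def using nN by auto
    have fcol: "S \<subseteq> {..<n} \<Longrightarrow> c (f S) = c {}" for S
    proof -
      assume S: "S \<subseteq> {..<n}"
      show ?thesis
      proof (cases "S = {}")
        case True then show ?thesis unfolding f_def by simp
      next
        case False
        have finS: "finite S" using S finite_subset by blast
        have "card ({n..<N} \<union> S) = card {n..<N} + card S"
          by (rule card_Un_disjoint) (use S finS in auto)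
        moreover have "card S \<ge> 1" using False finS by (simp add: Suc_leI card_gt_0_iff)
        ultimately have "N - n + 1 \<le> card (f S)" using False unfolding f_def by simp
        then show ?thesis using big fsub[OF S] by blast
      qed
    qed
    have ord: "\<forall>X\<in>boolean_lattice n. \<forall>Y\<in>boolean_lattice n. (f X \<subseteq> f Y) = (X \<subseteq> Y)"
    proof (intro ballI)
      fix X Y assume "X \<in> boolean_lattice n" "Y \<in> boolean_lattice n"
      then have XY: "X \<subseteq> {..<n}" "Y \<subseteq> {..<n}" unfolding boolean_lattice_def by auto
      show "(f X \<subseteq> f Y) = (X \<subseteq> Y)"
      proof (cases "X = {}")
        case True then show ?thesis unfolding f_def by simp
      next
        case Xne: False
        show ?thesis
        proof (cases "Y = {}")
          case True then show ?thesis using Xne unfolding f_def by auto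
        next
          case False
          have "{n..<N} \<union> X \<subseteq> {n..<N} \<union> Y \<longleftrightarrow> X \<subseteq> Y"
          proof
            assume h: "{n..<N} \<union> X \<subseteq> {n..<N} \<union> Y"
            show "X \<subseteq> Y"
            proof
              fix z assume "z \<in> X"
              then have "z < n" "z \<in> {n..<N} \<union> Y" using XY h by auto
              then show "z \<in> Y" by auto
            qed
          qed auto
          then show ?thesis using Xne False unfolding f_def by simp
        qed
      qed
    qed
    have "induced_copy (boolean_lattice n) N (f ` boolean_lattice n)"
      unfolding induced_copy_def
    proof (intro exI[of _ f] conjI)
      show "inj_on f (boolean_lattice n)"
      proof (rule inj_onI)
        fix X Y assume "X \<in> boolean_lattice n" "Y \<in> boolean_lattice n" "f X = f Y"
        then show "X = Y" using ord by (metis order_refl subset_antisym)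
      qed
      show "f ` boolean_lattice n \<subseteq> boolean_lattice N"
        using fsub unfolding boolean_lattice_def by auto
      show "\<forall>X\<in>boolean_lattice n. \<forall>Y\<in>boolean_lattice n. (f X \<subseteq> f Y) = (X \<subseteq> Y)" by (rule ord)
    qed simp
    moreover have "monochromatic c (f ` boolean_lattice n)"
      unfolding monochromatic_def boolean_lattice_def using fcol by auto
    ultimately show ?thesis by blast
  qed
qed

theorem theorem1p4:
  fixes k n :: nat
  assumes "k \<ge> 4" and "n \<ge> 1"
  shows "(k \<le> 2 ^ (boolean_ramsey 3 (boolean_lattice n) + n) \<longrightarrow>
           gallai_ramsey k (boolean_lattice 2) (boolean_lattice n)
             \<le> boolean_ramsey 3 (boolean_lattice n) + n)
       \<and> (k > 2 ^ (boolean_ramsey 3 (boolean_lattice n) + n) \<longrightarrow>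
           gr_good k (boolean_lattice 2) (boolean_lattice n))"
proof -
  define R where "R = boolean_ramsey 3 (boolean_lattice n)"
  have key: "\<forall>N\<ge>R + n. gr_property k (boolean_lattice 2) (boolean_lattice n) N"
    unfolding gr_property_def using main[OF ramsey_R[of n, folded R_def]] by blast
  have part1: "gallai_ramsey k (boolean_lattice 2) (boolean_lattice n) \<le> R + n"
    unfolding gallai_ramsey_def by (rule Least_le) (rule key)
  have part2: "gr_good k (boolean_lattice 2) (boolean_lattice n)" if kbig: "k > 2 ^ (R + n)"
    unfolding gr_good_def
  proof (intro allI impI)
    fix N :: nat assume "N > 0"
    show "gr_property k (boolean_lattice 2) (boolean_lattice n) N"
    proof (cases "R + n \<le> N")
      case True then show ?thesis using key by blast
    next
      case False
      have "\<not> exact_coloring k N c" for c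
      proof
        assume "exact_coloring k N c"
        then have "c ` Pow {..<N} = {1..k}" unfolding exact_coloring_def boolean_lattice_def .
        then have "k \<le> card (Pow {..<N::nat})" using card_image_le[of "Pow {..<N}" c] by simp
        also have "\<dots> = 2 ^ N" by (simp add: card_Pow)
        also have "\<dots> \<le> 2 ^ (R + n)" using False by (intro power_increasing) auto
        finally show False using kbig by simp
      qed
      then show ?thesis unfolding gr_property_def by blast
    qed
  qed
  show ?thesis using part1 part2 unfolding R_def by blast
qed

end
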